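(* Let $m\ge1$ and $k\ge0$ be integers. Then for every $n\in[km,(k+1)m)$ and $l\in\{1,\dots,d\}$, $$\mathcal D(\mathfrak x^l_n)\le\mathcal D(\mathfrak x^l_0)\big(1+\mathcal H^l_{[km,n)}\big)\prod_{s=1}^k\Big(1-\gamma(1-\gamma)^{m-1}\mathcal G_{[(s-1)m,sm)}+\mathcal H^l_{[(s-1)m,sm)}\Big),$$ with the convention $\mathcal H^l_{[km,km)}=0$.
   Context: Setting (random batch CBO). Fix integers $N\ge2$, $d\ge1$, batch size $P\ge2$, drift $\gamma\in(0,1)$, noise level $\zeta\ge0$; $\mathcal N=\{1,\dots,N\}$. Weight functions $\omega_{S,j}:(\mathbb R^d)^N\to[0,\infty)$ for nonempty $S\subseteq\mathcal N$, $j\in\mathcal N$, with $\sum_{j\in S}\omega_{S,j}=1$ and $\omega_{S,j}=0$ for $j\notin S$. $\mathcal A$ is the set of partitions of $\mathcal N$ into $\lceil N/P\rceil$ batches, all of size $P$ except possibly one of size at most $P$; $(\mathcal B^n)_{n\ge0}$ i.i.d. uniform on $\mathcal A$; $[i]_n$ is the batch of $\mathcal B^n$ containing $i$. Noise arrays $(\eta^{i,l}_n)_{i,l}$ are i.i.d. in $n$ with $\mathbb E\eta^{i,l}_n=0$, $\mathbb E|\eta^{i,l}_n|^2\le\zeta^2$; initial data, batches, and noises are mutually independent. The dynamics is $\mathbf x^i_{n+1}=\mathbf x^i_n-\gamma(\mathbf x^i_n-\bar{\mathbf x}^{[i]_n,*}_n)-\sum_{l=1}^d(x^{i,l}_n-\bar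 x^{[i]_n,*,l}_n)\eta^{i,l}_n\mathbf e_l$ with $\bar{\mathbf x}^{S,*}_n=\sum_j\omega_{S,j}(X_n)\mathbf x^j_n$, $X_n=(\mathbf x^1_n,\dots,\mathbf x^N_n)$. Let $\mathfrak x^l_n:=(x^{1,l}_n,\dots,x^{N,l}_n)^\top$, $\mathcal D(\mathbf z):=\max_iz_i-\min_iz_i$, $H^l_n:=\mathrm{diag}(\eta^{1,l}_n,\dots,\eta^{N,l}_n)$, $\|A\|_{1,\infty}:=\max_i\sum_j|a_{ij}|$. For $n\ge0$, $m\ge1$: $\mathcal G_{[n,n+m)}:=\min_{i,j}|\{r:n\le r<n+m,[i]_r=[j]_r\}|$ and $\mathcal H^l_{[n,n+m)}:=2\big[\prod_{r=n}^{n+m-1}(1+2\|H^l_r\|_{1,\infty})-1\big]$. *)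

theory Defs
  imports "HOL-Analysis.Analysis" "HOL-Library.Disjoint_Sets"
begin

text \<open>Particles are indexed by 1..N, coordinates by 1..d.\<close>

definition batch_partitions :: "nat \<Rightarrow> nat \<Rightarrow> nat set set set" where
  "batch_partitions N P = {B. partition_on {1..N} B
      \<and> card B = nat \<lceil>real N / real P\<rceil>
      \<and> (\<forall>S\<in>B. card S \<le> P)
      \<and> (\<exists>S0\<in>B. \<forall>S\<in>B - {S0}. card S = P)}"

definition batch_of :: "nat set set \<Rightarrow> nat \<Rightarrow> nat set" where
  "batch_of B i = (THE S. S \<in> B \<and> i \<in> S)"

definition diam :: "nat \<Rightarrow> (nat \<Rightarrow> real) \<Rightarrow> real" where
  "diam N z = (MAX i\<in>{1..N}. z i) - (MIN i\<in>{1..N}. z i)"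

definition norm_1inf :: "nat \<Rightarrow> (nat \<Rightarrow> nat \<Rightarrow> real) \<Rightarrow> real" where
  "norm_1inf N A = (MAX i\<in>{1..N}. \<Sum>j\<in>{1..N}. \<bar>A i j\<bar>)"

definition Hmat :: "(nat \<Rightarrow> nat \<Rightarrow> nat \<Rightarrow> real) \<Rightarrow> nat \<Rightarrow> nat \<Rightarrow> nat \<Rightarrow> nat \<Rightarrow> real" where
  "Hmat eta l r = (\<lambda>i j. if i = j then eta r i l else 0)"

definition Gcount :: "nat \<Rightarrow> (nat \<Rightarrow> nat set set) \<Rightarrow> nat \<Rightarrow> nat \<Rightarrow> nat" where
  "Gcount N B a b = (MIN p\<in>{1..N} \<times> {1..N}.
      card {r\<in>{a..<b}. batch_of (B r) (fst p) = batch_of (B r) (snd p)})"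

definition Hcoef :: "nat \<Rightarrow> (nat \<Rightarrow> nat \<Rightarrow> nat \<Rightarrow> real) \<Rightarrow> nat \<Rightarrow> nat \<Rightarrow> nat \<Rightarrow> real" where
  "Hcoef N eta l a b = 2 * ((\<Prod>r\<in>{a..<b}. 1 + 2 * norm_1inf N (Hmat eta l r)) - 1)"

end

theory Submission
  imports Defs
begin

primrec phi :: "real \<Rightarrow> nat \<Rightarrow> (nat \<Rightarrow> nat \<Rightarrow> nat \<Rightarrow> real) \<Rightarrow> nat \<Rightarrow> nat \<Rightarrow> nat \<Rightarrow> nat \<Rightarrow> real" where
  "phi g N a n0 0 = (\<lambda>i j. if i = j then 1 else 0)"
| "phi g N a n0 (Suc t) = (\<lambda>i j. (1-g) * phi g N a n0 t i j + g * (\<Sum>k\<in>{1..N}. a (n0+t) i k * phi g N a n0 t k j))"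

lemma diam_le:
  assumes "N \<ge> 1" "\<And>i k. i\<in>{1..N} \<Longrightarrow> k\<in>{1..N} \<Longrightarrow> z i - z k \<le> C"
  shows "diam N z \<le> C"
proof -
  have fin: "finite (z`{1..N})" and ne: "z`{1..N} \<noteq> {}" using assms by auto
  obtain i where i: "i\<in>{1..N}" "z i = Max (z`{1..N})" using Max_in[OF fin ne] by auto
  obtain k where k: "k\<in>{1..N}" "z k = Min (z`{1..N})" using Min_in[OF fin ne] by auto
  show ?thesis unfolding diam_def using assms(2)[OF i(1) k(1)] i k by simp
qed

lemma le_Max': "i\<in>{1..N} \<Longrightarrow> z i \<le> Max (z`{1..(N::nat)})"
  by (rule Max_ge) auto

lemma Min_le': "i\<in>{1..N} \<Longrightarrow> Min (z`{1..(N::nat)}) \<le> z i"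
  by (rule Min_le) auto

lemma diam_nonneg: "N \<ge> 1 \<Longrightarrow> 0 \<le> diam N z"
  unfolding diam_def using le_Max'[of 1 N z] Min_le'[of 1 N z] by auto

lemma cvx_upper:
  fixes p z :: "nat \<Rightarrow> real"
  assumes "\<And>j. j\<in>{1..N} \<Longrightarrow> 0 \<le> p j"
  shows "(\<Sum>j\<in>{1..N}. p j * z j) \<le> (\<Sum>j\<in>{1..N}. p j) * Max (z`{1..(N::nat)})"
proof -
  have "(\<Sum>j\<in>{1..N}. p j * z j) \<le> (\<Sum>j\<in>{1..N}. p j * Max (z`{1..(N::nat)}))"
    by (rule sum_mono) (use assms le_Max' in \<open>auto intro: mult_left_mono\<close>)
  thus ?thesis by (simp add: sum_distrib_right)
qed

lemma cvx_lower:
  fixes p z :: "nat \<Rightarrow> real"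
  assumes "\<And>j. j\<in>{1..N} \<Longrightarrow> 0 \<le> p j"
  shows "(\<Sum>j\<in>{1..N}. p j) * Min (z`{1..(N::nat)}) \<le> (\<Sum>j\<in>{1..N}. p j * z j)"
proof -
  have "(\<Sum>j\<in>{1..N}. p j * Min (z`{1..(N::nat)})) \<le> (\<Sum>j\<in>{1..N}. p j * z j)"
    by (rule sum_mono) (use assms Min_le' in \<open>auto intro: mult_left_mono\<close>)
  thus ?thesis by (simp add: sum_distrib_right)
qed

lemma abs_prod_bound:
  fixes y e D h :: real
  assumes "\<bar>y\<bar> \<le> D" "\<bar>e\<bar> \<le> h"
  shows "\<bar>y * e\<bar> \<le> D * h"
proof -
  have "\<bar>y\<bar> * \<bar>e\<bar> \<le> D * h" by (rule mult_mono) (use assms in auto)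
  thus ?thesis by (simp add: abs_mult)
qed

lemma geom_bound:
  fixes q :: real assumes "0 \<le> q" "q \<le> 1"
  shows "real (Suc m) * (1 - q) * q ^ m \<le> 1 - q ^ Suc m"
proof (induction m)
  case 0 then show ?case by simp
next
  case (Suc m)
  have "real (Suc (Suc m)) * (1 - q) * q ^ Suc m = q * (real (Suc m) * (1 - q) * q ^ m) + (1-q) * q ^ Suc m"
    by (simp add: algebra_simps)
  also have "\<dots> \<le> q * (1 - q ^ Suc m) + (1-q) * q ^ Suc m"
    using mult_left_mono[OF Suc.IH assms(1)] by linarith
  also have "\<dots> = q + (1 - q) * q ^ Suc m - q ^ Suc (Suc m)" by (simp add: algebra_simps)
  also have "\<dots> \<le> 1 - q ^ Suc (Suc m)"
  proof -
    have "q ^ Suc m \<le> 1" using assms by (intro power_le_one) auto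
    hence "(1 - q) * q ^ Suc m \<le> (1 - q) * 1" using assms by (intro mult_left_mono) auto
    hence "(1 - q) * q ^ Suc m \<le> 1 - q" by simp
    thus ?thesis by linarith
  qed
  finally show ?case .
qed

lemma batch_of_props:
  assumes "B \<in> batch_partitions N P" "i \<in> {1..N}"
  shows "batch_of B i \<in> B \<and> i \<in> batch_of B i"
proof -
  have pa: "partition_on {1..N} B" using assms(1) by (simp add: batch_partitions_def)
  obtain S where S: "S \<in> B" "i \<in> S" using partition_onD1[OF pa] assms(2) by auto
  have uq: "S' = S" if "S' \<in> B \<and> i \<in> S'" for S'
  proof (rule ccontr)
    assume "S' \<noteq> S"
    hence "S' \<inter> S = {}" using disjointD[OF partition_onD2[OF pa]] that S(1) by blast
    thus False using that S(2) by blast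
  qed
  have "batch_of B i = S" unfolding batch_of_def
    by (rule the_equality) (use S uq in blast)+
  thus ?thesis using S by simp
qed

lemma batch_of_sub:
  assumes "B \<in> batch_partitions N P" "i \<in> {1..N}"
  shows "batch_of B i \<noteq> {} \<and> batch_of B i \<subseteq> {1..N}"
proof -
  have pa: "partition_on {1..N} B" using assms(1) by (simp add: batch_partitions_def)
  show ?thesis using batch_of_props[OF assms] partition_onD1[OF pa] by auto
qed

lemma Gcount_le:
  assumes "i\<in>{1..N}" "k\<in>{1..N}"
  shows "Gcount N B a b \<le> card {r\<in>{a..<b}. batch_of (B r) i = batch_of (B r) k}"
proof -
  let ?f = "\<lambda>p. card {r\<in>{a..<b}. batch_of (B r) (fst p) = batch_of (B r) (snd p)}"
  have "?f (i,k) \<in> ?f ` ({1..N} \<times> {1..N})" using assms by blast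
  hence "Min (?f ` ({1..N} \<times> {1..N})) \<le> ?f (i,k)" by (intro Min_le) auto
  thus ?thesis unfolding Gcount_def by simp
qed

lemma Gcount_le_len: assumes "N \<ge> 1" shows "Gcount N B a b \<le> b - a"
proof -
  have "card {r\<in>{a..<b}. batch_of (B r) 1 = batch_of (B r) 1} \<le> card {a..<b}"
    by (rule card_mono) auto
  thus ?thesis using Gcount_le[of 1 N 1 B a b] assms by simp
qed


locale cbo =
  fixes N :: nat and \<gamma> :: real
    and \<omega> :: "nat set \<Rightarrow> nat \<Rightarrow> (nat \<Rightarrow> nat \<Rightarrow> real) \<Rightarrow> real"
    and B :: "nat \<Rightarrow> nat set set"
    and eta :: "nat \<Rightarrow> nat \<Rightarrow> nat \<Rightarrow> real"
    and x :: "nat \<Rightarrow> nat \<Rightarrow> nat \<Rightarrow> real"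
    and l :: nat
  assumes N1: "N \<ge> 1" and g0: "0 < \<gamma>" and g1: "\<gamma> < 1"
    and \<omega>_nonneg: "\<And>S j X. S \<noteq> {} \<Longrightarrow> S \<subseteq> {1..N} \<Longrightarrow> \<omega> S j X \<ge> 0"
    and \<omega>_sum: "\<And>S X. S \<noteq> {} \<Longrightarrow> S \<subseteq> {1..N} \<Longrightarrow> (\<Sum>j\<in>S. \<omega> S j X) = 1"
    and \<omega>_out: "\<And>S j X. S \<noteq> {} \<Longrightarrow> S \<subseteq> {1..N} \<Longrightarrow> j \<notin> S \<Longrightarrow> \<omega> S j X = 0"
    and bo: "\<And>r i. i \<in> {1..N} \<Longrightarrow> batch_of (B r) i \<noteq> {} \<and> batch_of (B r) i \<subseteq> {1..N}"
    and dynl: "\<And>n i. i \<in> {1..N} \<Longrightarrow>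
       x (Suc n) i l = x n i l
         - \<gamma> * (x n i l - (\<Sum>j\<in>{1..N}. \<omega> (batch_of (B n) i) j (x n) * x n j l))
         - (x n i l - (\<Sum>j\<in>{1..N}. \<omega> (batch_of (B n) i) j (x n) * x n j l)) * eta n i l"
begin

definition a where "a r i j = \<omega> (batch_of (B r) i) j (x r)"
definition v where "v r = (\<lambda>i. x r i l)"
definition h where "h r = norm_1inf N (Hmat eta l r)"
definition u where "u n0 t i = (\<Sum>j\<in>{1..N}. phi \<gamma> N a n0 t i j * v n0 j)"
definition Pi where "Pi n0 t = (\<Prod>r\<in>{n0..<n0+t}. 1 + 2 * h r)"
definition c where "c t = \<gamma> * (1 - \<gamma>) ^ (t - 1)"

lemma a_nonneg: "i \<in> {1..N} \<Longrightarrow> 0 \<le> a r i j"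
  unfolding a_def using bo \<omega>_nonneg by blast

lemma a_sum: assumes "i \<in> {1..N}" shows "(\<Sum>j\<in>{1..N}. a r i j) = 1"
proof -
  let ?S = "batch_of (B r) i"
  have S: "?S \<noteq> {}" "?S \<subseteq> {1..N}" using bo[OF assms] by auto
  have "(\<Sum>j\<in>{1..N}. a r i j) = (\<Sum>j\<in>?S. a r i j)"
    by (rule sum.mono_neutral_right) (use S \<omega>_out in \<open>auto simp: a_def\<close>)
  also have "\<dots> = 1" unfolding a_def using \<omega>_sum[OF S] by simp
  finally show ?thesis .
qed

lemma v_step: assumes "i \<in> {1..N}"
  shows "v (Suc r) i = (1-\<gamma>) * v r i + \<gamma> * (\<Sum>k\<in>{1..N}. a r i k * v r k)
           - (v r i - (\<Sum>k\<in>{1..N}. a r i k * v r k)) * eta r i l"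
  unfolding v_def a_def using dynl[OF assms, of r] by (simp add: algebra_simps)

lemma eta_le: assumes "i \<in> {1..N}" shows "\<bar>eta r i l\<bar> \<le> h r"
proof -
  have "\<bar>eta r i l\<bar> = \<bar>Hmat eta l r i i\<bar>" by (simp add: Hmat_def)
  also have "\<dots> \<le> (\<Sum>j\<in>{1..N}. \<bar>Hmat eta l r i j\<bar>)"
    by (rule member_le_sum) (use assms in auto)
  also have "\<dots> \<le> h r" unfolding h_def norm_1inf_def
    by (rule Max_ge) (use assms in auto)
  finally show ?thesis .
qed

lemma h_nonneg: "0 \<le> h r"
  using eta_le[of 1 r] N1 by auto

lemma w_bounds: assumes "i \<in> {1..N}"
  shows "Min (z`{1..N}) \<le> (\<Sum>k\<in>{1..N}. a r i k * z k)"
    and "(\<Sum>k\<in>{1..N}. a r i k * z k) \<le> Max (z`{1..N})"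
  using cvx_lower[of N "a r i" z] cvx_upper[of N "a r i" z] a_nonneg[OF assms] a_sum[OF assms]
  by auto

lemma D_step: "diam N (v (Suc r)) \<le> (1 + 2 * h r) * diam N (v r)"
proof (rule diam_le[OF N1])
  let ?M = "Max (v r ` {1..N})" and ?L = "Min (v r ` {1..N})"
  have D: "diam N (v r) = ?M - ?L" by (simp add: diam_def)
  let ?w = "\<lambda>i. (\<Sum>k\<in>{1..N}. a r i k * v r k)"
  have hi: "v (Suc r) i \<le> ?M + h r * diam N (v r)"
    and lo: "?L - h r * diam N (v r) \<le> v (Suc r) i" if i: "i \<in> {1..N}" for i
  proof -
    have b1: "?L \<le> v r i" "v r i \<le> ?M" using Min_le' le_Max' i by auto
    have b2: "?L \<le> ?w i" "?w i \<le> ?M" using w_bounds[OF i] by auto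
    have ab: "\<bar>(v r i - ?w i) * eta r i l\<bar> \<le> diam N (v r) * h r"
      by (rule abs_prod_bound) (use b1 b2 D eta_le[OF i] in auto)
    have c1: "(1-\<gamma>) * v r i \<le> (1-\<gamma>) * ?M" "\<gamma> * ?w i \<le> \<gamma> * ?M"
      "(1-\<gamma>) * ?L \<le> (1-\<gamma>) * v r i" "\<gamma> * ?L \<le> \<gamma> * ?w i"
      using b1 b2 g0 g1 by (auto intro: mult_left_mono)
    have e1: "(1-\<gamma>) * ?M + \<gamma> * ?M = ?M" "(1-\<gamma>) * ?L + \<gamma> * ?L = ?L" by (simp_all add: algebra_simps)
    show "v (Suc r) i \<le> ?M + h r * diam N (v r)"
      using v_step[OF i, of r] c1 e1 ab by (simp add: abs_le_iff mult.commute; linarith)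
    show "?L - h r * diam N (v r) \<le> v (Suc r) i"
      using v_step[OF i, of r] c1 e1 ab by (simp add: abs_le_iff mult.commute; linarith)
  qed
  fix i k assume i: "i \<in> {1..N}" and k: "k \<in> {1..N}"
  show "v (Suc r) i - v (Suc r) k \<le> (1 + 2 * h r) * diam N (v r)"
  proof -
    have "(1 + 2*h r) * diam N (v r) = diam N (v r) + 2 * (h r * diam N (v r))" by (simp add: algebra_simps)
    thus ?thesis using hi[OF i] lo[OF k] D by linarith
  qed
qed

end


context cbo begin

lemma c_nonneg: "0 \<le> c t"
  unfolding c_def using g0 g1 by simp

lemma phi_nonneg: "i \<in> {1..N} \<Longrightarrow> 0 \<le> phi \<gamma> N a n0 t i j"
proof (induction t arbitrary: i j)
  case 0 then show ?case by simp
next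
  case (Suc t)
  have "0 \<le> (\<Sum>k\<in>{1..N}. a (n0+t) i k * phi \<gamma> N a n0 t k j)"
    by (rule sum_nonneg) (use Suc a_nonneg in auto)
  moreover have "0 \<le> phi \<gamma> N a n0 t i j" using Suc by blast
  ultimately show ?case using g0 g1 by simp
qed

lemma phi_sum: "i \<in> {1..N} \<Longrightarrow> (\<Sum>j\<in>{1..N}. phi \<gamma> N a n0 t i j) = 1"
proof (induction t arbitrary: i)
  case 0 then show ?case by simp
next
  case (Suc t)
  have "(\<Sum>j\<in>{1..N}. \<Sum>k\<in>{1..N}. a (n0+t) i k * phi \<gamma> N a n0 t k j)
      = (\<Sum>k\<in>{1..N}. a (n0+t) i k * (\<Sum>j\<in>{1..N}. phi \<gamma> N a n0 t k j))"
    by (subst sum.swap) (simp add: sum_distrib_left)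
  also have "\<dots> = (\<Sum>k\<in>{1..N}. a (n0+t) i k)" using Suc.IH by simp
  also have "\<dots> = 1" using a_sum[OF Suc.prems] .
  finally have S: "(\<Sum>j\<in>{1..N}. \<Sum>k\<in>{1..N}. a (n0+t) i k * phi \<gamma> N a n0 t k j) = 1" .
  have "(\<Sum>j\<in>{1..N}. phi \<gamma> N a n0 (Suc t) i j)
     = (1-\<gamma>) * (\<Sum>j\<in>{1..N}. phi \<gamma> N a n0 t i j) + \<gamma> * (\<Sum>j\<in>{1..N}. \<Sum>k\<in>{1..N}. a (n0+t) i k * phi \<gamma> N a n0 t k j)"
    by (simp add: sum.distrib sum_distrib_left)
  also have "\<dots> = 1" using S Suc.IH[OF Suc.prems] by simp
  finally show ?case .
qed

lemma phi_lower:
  "i \<in> {1..N} \<Longrightarrow> j \<in> {1..N} \<Longrightarrow>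
   (1-\<gamma>)^t * (if i = j then 1 else 0) + c t * (\<Sum>r\<in>{n0..<n0+t}. a r i j) \<le> phi \<gamma> N a n0 t i j"
proof (induction t arbitrary: i j)
  case 0 then show ?case by simp
next
  case (Suc t)
  note i = Suc.prems(1) and j = Suc.prems(2)
  let ?p = "phi \<gamma> N a n0 t"
  let ?S = "\<Sum>r\<in>{n0..<n0+t}. a r i j"
  let ?d = "(if i = j then 1 else 0) :: real"
  let ?Z = "\<Sum>k\<in>{1..N}. a (n0+t) i k * ?p k j"
  have Sn: "0 \<le> ?S" by (rule sum_nonneg) (use a_nonneg i in auto)
  have ct: "(1-\<gamma>) * (c t * ?S) = c (Suc t) * ?S"
  proof (cases t)
    case 0 then show ?thesis by simp
  next
    case (Suc t') then show ?thesis by (simp add: c_def algebra_simps)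
  qed
  have cS: "c (Suc t) = \<gamma> * (1-\<gamma>)^t" by (simp add: c_def)
  have jj: "(1-\<gamma>)^t \<le> ?p j j"
  proof -
    have "0 \<le> c t * (\<Sum>r\<in>{n0..<n0+t}. a r j j)"
      using c_nonneg by (intro mult_nonneg_nonneg sum_nonneg) (use a_nonneg j in auto)
    thus ?thesis using Suc.IH[OF j j] by simp
  qed
  have A: "(1-\<gamma>) * ((1-\<gamma>)^t * ?d + c t * ?S) \<le> (1-\<gamma>) * ?p i j"
    by (rule mult_left_mono) (use Suc.IH[OF i j] g1 in auto)
  have B: "(1-\<gamma>) * ((1-\<gamma>)^t * ?d + c t * ?S) = (1-\<gamma>)^Suc t * ?d + c (Suc t) * ?S"
    unfolding distrib_left ct by simp
  have C1: "a (n0+t) i j * ?p j j \<le> ?Z"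
    by (rule member_le_sum[where i=j, OF j]) (use a_nonneg phi_nonneg i in \<open>auto intro: mult_nonneg_nonneg\<close>)
  have C2: "a (n0+t) i j * (1-\<gamma>)^t \<le> a (n0+t) i j * ?p j j"
    by (rule mult_left_mono) (use jj a_nonneg i in auto)
  have C: "c (Suc t) * a (n0+t) i j \<le> \<gamma> * ?Z"
  proof -
    have "\<gamma> * (a (n0+t) i j * (1-\<gamma>)^t) \<le> \<gamma> * ?Z"
      by (rule mult_left_mono) (use C1 C2 g0 in auto)
    thus ?thesis unfolding cS by (simp add: algebra_simps)
  qed
  have E: "phi \<gamma> N a n0 (Suc t) i j = (1-\<gamma>) * ?p i j + \<gamma> * ?Z" by simp
  have F: "(\<Sum>r\<in>{n0..<n0+Suc t}. a r i j) = ?S + a (n0+t) i j" by simp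
  show ?case unfolding E F distrib_left using A B C by linarith
qed

lemma u0: "i \<in> {1..N} \<Longrightarrow> u n0 0 i = v n0 i"
proof -
  assume i: "i \<in> {1..N}"
  have "u n0 0 i = (\<Sum>j\<in>{1..N}. if j = i then v n0 j else 0)"
    unfolding u_def by (rule sum.cong) auto
  thus ?thesis using i by simp
qed

lemma u_step: assumes "i \<in> {1..N}"
  shows "u n0 (Suc t) i = (1-\<gamma>) * u n0 t i + \<gamma> * (\<Sum>k\<in>{1..N}. a (n0+t) i k * u n0 t k)"
proof -
  let ?p = "phi \<gamma> N a n0 t"
  have "(\<Sum>k\<in>{1..N}. a (n0+t) i k * u n0 t k) = (\<Sum>k\<in>{1..N}. \<Sum>j\<in>{1..N}. a (n0+t) i k * ?p k j * v n0 j)"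
    unfolding u_def by (simp add: sum_distrib_left mult.assoc)
  also have "\<dots> = (\<Sum>j\<in>{1..N}. \<Sum>k\<in>{1..N}. a (n0+t) i k * ?p k j * v n0 j)"
    by (rule sum.swap)
  also have "\<dots> = (\<Sum>j\<in>{1..N}. (\<Sum>k\<in>{1..N}. a (n0+t) i k * ?p k j) * v n0 j)"
    by (simp add: sum_distrib_right)
  finally have X: "(\<Sum>k\<in>{1..N}. a (n0+t) i k * u n0 t k) = (\<Sum>j\<in>{1..N}. (\<Sum>k\<in>{1..N}. a (n0+t) i k * ?p k j) * v n0 j)" .
  let ?Z = "\<lambda>j. (\<Sum>k\<in>{1..N}. a (n0+t) i k * ?p k j)"
  have "u n0 (Suc t) i = (\<Sum>j\<in>{1..N}. (1-\<gamma>) * (?p i j * v n0 j) + \<gamma> * (?Z j * v n0 j))"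
    unfolding u_def by (rule sum.cong) (simp_all add: distrib_right mult.assoc)
  also have "\<dots> = (1-\<gamma>) * (\<Sum>j\<in>{1..N}. ?p i j * v n0 j) + \<gamma> * (\<Sum>j\<in>{1..N}. ?Z j * v n0 j)"
    by (simp only: sum.distrib sum_distrib_left)
  finally show ?thesis unfolding X unfolding u_def .
qed

end


context cbo begin

lemma coupling:
  assumes i: "i \<in> {1..N}" and k: "k \<in> {1..N}"
  shows "u n0 t i - u n0 t k
     \<le> (1 - c t * real (card {r\<in>{n0..<n0+t}. batch_of (B r) i = batch_of (B r) k})) * diam N (v n0)"
proof -
  let ?R = "{r\<in>{n0..<n0+t}. batch_of (B r) i = batch_of (B r) k}"
  let ?p = "phi \<gamma> N a n0 t"
  let ?M = "Max (v n0 ` {1..N})" and ?L = "Min (v n0 ` {1..N})"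
  define \<mu> where "\<mu> j = c t * (\<Sum>r\<in>?R. a r i j)" for j
  have low: "c t * (\<Sum>r\<in>?R. a r i' j) \<le> ?p i' j" if i': "i' \<in> {1..N}" and j: "j \<in> {1..N}" for i' j
  proof -
    have "(\<Sum>r\<in>?R. a r i' j) \<le> (\<Sum>r\<in>{n0..<n0+t}. a r i' j)"
      by (rule sum_mono2) (use a_nonneg i' in auto)
    hence "c t * (\<Sum>r\<in>?R. a r i' j) \<le> c t * (\<Sum>r\<in>{n0..<n0+t}. a r i' j)"
      using c_nonneg by (rule mult_left_mono)
    moreover have "0 \<le> (1-\<gamma>)^t * (if i' = j then 1 else 0)" using g1 by simp
    ultimately show ?thesis using phi_lower[OF i' j, of t n0] by linarith
  qed
  have pi: "\<mu> j \<le> ?p i j" if "j \<in> {1..N}" for j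
    unfolding \<mu>_def using low[OF i that] .
  have pk: "\<mu> j \<le> ?p k j" if "j \<in> {1..N}" for j
  proof -
    have "(\<Sum>r\<in>?R. a r i j) = (\<Sum>r\<in>?R. a r k j)"
      by (rule sum.cong) (auto simp: a_def)
    thus ?thesis unfolding \<mu>_def using low[OF k that] by simp
  qed
  have \<mu>sum: "(\<Sum>j\<in>{1..N}. \<mu> j) = c t * real (card ?R)"
  proof -
    have "(\<Sum>j\<in>{1..N}. \<mu> j) = c t * (\<Sum>j\<in>{1..N}. \<Sum>r\<in>?R. a r i j)"
      unfolding \<mu>_def by (simp add: sum_distrib_left)
    also have "(\<Sum>j\<in>{1..N}. \<Sum>r\<in>?R. a r i j) = (\<Sum>r\<in>?R. \<Sum>j\<in>{1..N}. a r i j)"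
      by (rule sum.swap)
    also have "\<dots> = (\<Sum>r\<in>?R. 1)" using a_sum[OF i] by simp
    finally show ?thesis by simp
  qed
  let ?s = "1 - c t * real (card ?R)"
  have Sp: "(\<Sum>j\<in>{1..N}. ?p i j - \<mu> j) = ?s"
    using phi_sum[OF i] \<mu>sum by (simp add: sum_subtractf)
  have Sq: "(\<Sum>j\<in>{1..N}. ?p k j - \<mu> j) = ?s"
    using phi_sum[OF k] \<mu>sum by (simp add: sum_subtractf)
  have dec: "u n0 t i' = (\<Sum>j\<in>{1..N}. (?p i' j - \<mu> j) * v n0 j) + (\<Sum>j\<in>{1..N}. \<mu> j * v n0 j)" for i'
  proof -
    have "u n0 t i' = (\<Sum>j\<in>{1..N}. (?p i' j - \<mu> j) * v n0 j + \<mu> j * v n0 j)"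
      unfolding u_def by (rule sum.cong) (simp_all add: algebra_simps)
    thus ?thesis by (simp add: sum.distrib)
  qed
  have U: "(\<Sum>j\<in>{1..N}. (?p i j - \<mu> j) * v n0 j) \<le> ?s * ?M"
    using cvx_upper[of N "\<lambda>j. ?p i j - \<mu> j" "v n0"] pi Sp by simp
  have L: "?s * ?L \<le> (\<Sum>j\<in>{1..N}. (?p k j - \<mu> j) * v n0 j)"
    using cvx_lower[of N "\<lambda>j. ?p k j - \<mu> j" "v n0"] pk Sq by simp
  have "u n0 t i - u n0 t k \<le> ?s * ?M - ?s * ?L" using dec[of i] dec[of k] U L by linarith
  also have "\<dots> = ?s * diam N (v n0)" by (simp add: diam_def algebra_simps)
  finally show ?thesis .
qed

lemma D_growth: "diam N (v (n0+t)) \<le> Pi n0 t * diam N (v n0)"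
proof (induction t)
  case 0 then show ?case by (simp add: Pi_def)
next
  case (Suc t)
  have "diam N (v (n0 + Suc t)) \<le> (1 + 2 * h (n0+t)) * diam N (v (n0+t))"
    using D_step[of "n0+t"] by simp
  also have "\<dots> \<le> (1 + 2 * h (n0+t)) * (Pi n0 t * diam N (v n0))"
    by (rule mult_left_mono) (use Suc h_nonneg[of "n0+t"] in auto)
  also have "\<dots> = Pi n0 (Suc t) * diam N (v n0)" by (simp add: Pi_def algebra_simps)
  finally show ?case .
qed

lemma Pi_ge1: "1 \<le> Pi n0 t"
  unfolding Pi_def by (rule prod_ge_1) (use h_nonneg in auto)

lemma err: "i \<in> {1..N} \<Longrightarrow> \<bar>v (n0+t) i - u n0 t i\<bar> \<le> (Pi n0 t - 1) * diam N (v n0)"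
proof (induction t arbitrary: i)
  case 0 then show ?case using u0 by (simp add: Pi_def)
next
  case (Suc t)
  note i = Suc.prems
  let ?r = "n0+t"
  let ?E = "(Pi n0 t - 1) * diam N (v n0)"
  let ?w = "\<Sum>k\<in>{1..N}. a ?r i k * v ?r k"
  have e: "v (n0 + Suc t) i - u n0 (Suc t) i
    = (1-\<gamma>) * (v ?r i - u n0 t i) + \<gamma> * (\<Sum>k\<in>{1..N}. a ?r i k * (v ?r k - u n0 t k))
      - (v ?r i - ?w) * eta ?r i l"
    using v_step[OF i, of ?r] u_step[OF i, of n0 t]
    by (simp add: algebra_simps sum_subtractf)
  have E0: "0 \<le> ?E" using Pi_ge1 diam_nonneg[OF N1] by simp
  have t1: "\<bar>(1-\<gamma>) * (v ?r i - u n0 t i)\<bar> \<le> (1-\<gamma>) * ?E"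
    using Suc.IH[OF i] g1 by (simp add: abs_mult mult_left_mono)
  have "\<bar>\<Sum>k\<in>{1..N}. a ?r i k * (v ?r k - u n0 t k)\<bar> \<le> (\<Sum>k\<in>{1..N}. \<bar>a ?r i k * (v ?r k - u n0 t k)\<bar>)"
    by (rule sum_abs)
  also have "\<dots> \<le> (\<Sum>k\<in>{1..N}. a ?r i k * ?E)"
    by (rule sum_mono) (use a_nonneg[OF i] Suc.IH in \<open>auto simp: abs_mult intro: mult_left_mono\<close>)
  also have "\<dots> = ?E" using a_sum[OF i] by (simp add: sum_distrib_right[symmetric])
  finally have t2': "\<bar>\<Sum>k\<in>{1..N}. a ?r i k * (v ?r k - u n0 t k)\<bar> \<le> ?E" .
  have t2: "\<bar>\<gamma> * (\<Sum>k\<in>{1..N}. a ?r i k * (v ?r k - u n0 t k))\<bar> \<le> \<gamma> * ?E"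
    using t2' g0 by (simp add: abs_mult mult_left_mono)
  have b1: "Min (v ?r ` {1..N}) \<le> v ?r i" "v ?r i \<le> Max (v ?r ` {1..N})" using Min_le' le_Max' i by auto
  have b2: "Min (v ?r ` {1..N}) \<le> ?w" "?w \<le> Max (v ?r ` {1..N})" using w_bounds[OF i] by auto
  have t3: "\<bar>(v ?r i - ?w) * eta ?r i l\<bar> \<le> diam N (v ?r) * h ?r"
    by (rule abs_prod_bound) (use b1 b2 eta_le[OF i] in \<open>auto simp: diam_def\<close>)
  have t3': "diam N (v ?r) * h ?r \<le> (Pi n0 t * diam N (v n0)) * h ?r"
    by (rule mult_right_mono) (use D_growth[of n0 t] h_nonneg in auto)
  have t4: "0 \<le> (Pi n0 t * diam N (v n0)) * h ?r"
    using Pi_ge1[of n0 t] diam_nonneg[OF N1] h_nonneg by simp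
  have PS: "(Pi n0 (Suc t) - 1) * diam N (v n0) = ?E + 2 * ((Pi n0 t * diam N (v n0)) * h ?r)"
    by (simp add: Pi_def algebra_simps)
  have "\<bar>v (n0 + Suc t) i - u n0 (Suc t) i\<bar> \<le> (1-\<gamma>) * ?E + \<gamma> * ?E + diam N (v ?r) * h ?r"
    unfolding e using t1 t2 t3 by (simp add: abs_le_iff; linarith)
  also have "(1-\<gamma>) * ?E + \<gamma> * ?E = ?E" by (simp add: algebra_simps)
  finally show ?case unfolding PS using t3' t4 by linarith
qed

lemma block:
  "diam N (v (n0+t)) \<le> (1 - c t * real (Gcount N B n0 (n0+t)) + Hcoef N eta l n0 (n0+t)) * diam N (v n0)"
proof (rule diam_le[OF N1])
  fix i k assume i: "i \<in> {1..N}" and k: "k \<in> {1..N}"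
  let ?R = "{r\<in>{n0..<n0+t}. batch_of (B r) i = batch_of (B r) k}"
  let ?D = "diam N (v n0)"
  have H: "Hcoef N eta l n0 (n0+t) = 2 * (Pi n0 t - 1)"
    by (simp add: Hcoef_def Pi_def h_def)
  have G: "c t * real (Gcount N B n0 (n0+t)) * ?D \<le> c t * real (card ?R) * ?D"
    using Gcount_le[OF i k, of B n0 "n0+t"] c_nonneg diam_nonneg[OF N1]
    by (intro mult_right_mono mult_left_mono) auto
  have "v (n0+t) i - v (n0+t) k \<le> (u n0 t i - u n0 t k) + 2 * ((Pi n0 t - 1) * ?D)"
    using err[OF i, of n0 t] err[OF k, of n0 t] by (simp add: abs_le_iff; linarith)
  also have "\<dots> \<le> (1 - c t * real (card ?R)) * ?D + 2 * ((Pi n0 t - 1) * ?D)"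
    using coupling[OF i k, of n0 t] by simp
  also have "\<dots> \<le> (1 - c t * real (Gcount N B n0 (n0+t)) + Hcoef N eta l n0 (n0+t)) * ?D"
    unfolding H using G by (simp add: algebra_simps)
  finally show "v (n0+t) i - v (n0+t) k \<le> (1 - c t * real (Gcount N B n0 (n0+t)) + Hcoef N eta l n0 (n0+t)) * ?D" .
qed

end


context cbo begin

lemma Hcoef_nonneg: "0 \<le> Hcoef N eta l a' b'"
proof -
  have "1 \<le> (\<Prod>r\<in>{a'..<b'}. 1 + 2 * norm_1inf N (Hmat eta l r))"
    by (rule prod_ge_1) (use h_nonneg in \<open>auto simp: h_def\<close>)
  thus ?thesis by (simp add: Hcoef_def)
qed

lemma final:
  assumes m1: "m \<ge> 1" and n1: "k*m \<le> n" and n2: "n < (k+1)*m"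
  shows "diam N (\<lambda>i. x n i l)
       \<le> diam N (\<lambda>i. x 0 i l) * (1 + Hcoef N eta l (k * m) n)
         * (\<Prod>s\<in>{1..k}. 1 - \<gamma> * (1 - \<gamma>) ^ (m - 1) * real (Gcount N B ((s - 1) * m) (s * m))
                           + Hcoef N eta l ((s - 1) * m) (s * m))"
proof -
  define F where "F s = 1 - \<gamma> * (1 - \<gamma>) ^ (m - 1) * real (Gcount N B ((s - 1) * m) (s * m))
                           + Hcoef N eta l ((s - 1) * m) (s * m)" for s
  have vx: "v r = (\<lambda>i. x r i l)" for r by (simp add: v_def)
  have Dnn: "0 \<le> diam N (v r)" for r using diam_nonneg[OF N1] .
  have cm: "\<gamma> * (1 - \<gamma>) ^ (m - 1) * real m \<le> 1"
  proof -
    have "real (Suc (m-1)) * (1 - (1-\<gamma>)) * (1-\<gamma>) ^ (m-1) \<le> 1 - (1-\<gamma>) ^ Suc (m-1)"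
      by (rule geom_bound) (use g0 g1 in auto)
    moreover have "0 \<le> (1-\<gamma>) ^ Suc (m-1)" using g1 by simp
    moreover have "Suc (m-1) = m" using m1 by simp
    ultimately show ?thesis by (simp add: algebra_simps)
  qed
  have Fnn: "0 \<le> F s" for s
  proof -
    have "Gcount N B ((s - 1) * m) (s * m) \<le> s * m - (s - 1) * m"
      using Gcount_le_len[OF N1] .
    also have "\<dots> \<le> m" by (cases s) auto
    finally have "real (Gcount N B ((s - 1) * m) (s * m)) \<le> real m" by simp
    hence "\<gamma> * (1 - \<gamma>) ^ (m - 1) * real (Gcount N B ((s - 1) * m) (s * m)) \<le> \<gamma> * (1 - \<gamma>) ^ (m - 1) * real m"
      using g0 g1 by (intro mult_left_mono) auto
    thus ?thesis unfolding F_def using cm Hcoef_nonneg[of "(s - 1) * m" "s * m"] by linarith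
  qed
  have stepk: "diam N (v (Suc k' * m)) \<le> F (Suc k') * diam N (v (k' * m))" for k'
  proof -
    have e1: "(Suc k' - 1) * m = k'*m" by simp
    have e2: "Suc k' * m = k'*m + m" by simp
    have Fe: "F (Suc k') = 1 - c m * real (Gcount N B (k'*m) (k'*m + m)) + Hcoef N eta l (k'*m) (k'*m + m)"
      unfolding F_def e1 e2 c_def by simp
    show ?thesis unfolding Fe e2 by (rule block)
  qed
  have blocks: "diam N (v (k' * m)) \<le> diam N (v 0) * (\<Prod>s\<in>{1..k'}. F s)" for k'
  proof (induction k')
    case 0 then show ?case by simp
  next
    case (Suc k')
    have "diam N (v (Suc k' * m)) \<le> F (Suc k') * diam N (v (k' * m))" by (rule stepk)
    also have "\<dots> \<le> F (Suc k') * (diam N (v 0) * (\<Prod>s\<in>{1..k'}. F s))"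
      by (rule mult_left_mono) (use Suc Fnn in auto)
    also have "\<dots> = diam N (v 0) * (\<Prod>s\<in>{1..Suc k'}. F s)"
    proof -
      have "{1..Suc k'} = insert (Suc k') {1..k'}" by auto
      thus ?thesis by (simp add: algebra_simps)
    qed
    finally show ?case .
  qed
  define t where "t = n - k*m"
  have nt: "n = k*m + t" using n1 t_def by simp
  have "diam N (v n) \<le> (1 - c t * real (Gcount N B (k*m) (k*m+t)) + Hcoef N eta l (k*m) (k*m+t)) * diam N (v (k*m))"
    using block[of "k*m" t] nt by simp
  also have "\<dots> \<le> (1 + Hcoef N eta l (k*m) n) * diam N (v (k*m))"
  proof (rule mult_right_mono)
    have "0 \<le> c t * real (Gcount N B (k*m) (k*m+t))" using c_nonneg by simp
    thus "1 - c t * real (Gcount N B (k*m) (k*m+t)) + Hcoef N eta l (k*m) (k*m+t) \<le> 1 + Hcoef N eta l (k*m) n"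
      using nt by simp
  qed (rule Dnn)
  also have "\<dots> \<le> (1 + Hcoef N eta l (k*m) n) * (diam N (v 0) * (\<Prod>s\<in>{1..k}. F s))"
    by (rule mult_left_mono) (use blocks Hcoef_nonneg in auto)
  finally show ?thesis unfolding F_def vx by (simp add: algebra_simps)
qed

end

theorem lemma4p4:
  fixes N d P :: nat and \<gamma> :: real
    and \<omega> :: "nat set \<Rightarrow> nat \<Rightarrow> (nat \<Rightarrow> nat \<Rightarrow> real) \<Rightarrow> real"
    and B :: "nat \<Rightarrow> nat set set"
    and eta :: "nat \<Rightarrow> nat \<Rightarrow> nat \<Rightarrow> real"
    and x :: "nat \<Rightarrow> nat \<Rightarrow> nat \<Rightarrow> real"
    and m k :: nat
  assumes "N \<ge> 2" and "d \<ge> 1" and "P \<ge> 2" and "0 < \<gamma>" and "\<gamma> < 1"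
    and \<omega>_nonneg: "\<And>S j X. S \<noteq> {} \<Longrightarrow> S \<subseteq> {1..N} \<Longrightarrow> \<omega> S j X \<ge> 0"
    and \<omega>_sum: "\<And>S X. S \<noteq> {} \<Longrightarrow> S \<subseteq> {1..N} \<Longrightarrow> (\<Sum>j\<in>S. \<omega> S j X) = 1"
    and \<omega>_out: "\<And>S j X. S \<noteq> {} \<Longrightarrow> S \<subseteq> {1..N} \<Longrightarrow> j \<notin> S \<Longrightarrow> \<omega> S j X = 0"
    and batches: "\<And>n. B n \<in> batch_partitions N P"
    and dyn: "\<And>n i l. i \<in> {1..N} \<Longrightarrow> l \<in> {1..d} \<Longrightarrow>
       x (Suc n) i l = x n i l
         - \<gamma> * (x n i l - (\<Sum>j\<in>{1..N}. \<omega> (batch_of (B n) i) j (x n) * x n j l))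
         - (x n i l - (\<Sum>j\<in>{1..N}. \<omega> (batch_of (B n) i) j (x n) * x n j l)) * eta n i l"
    and "m \<ge> 1"
  shows "\<forall>n l. k * m \<le> n \<and> n < (k + 1) * m \<and> l \<in> {1..d} \<longrightarrow>
     diam N (\<lambda>i. x n i l)
       \<le> diam N (\<lambda>i. x 0 i l) * (1 + Hcoef N eta l (k * m) n)
         * (\<Prod>s\<in>{1..k}. 1 - \<gamma> * (1 - \<gamma>) ^ (m - 1) * real (Gcount N B ((s - 1) * m) (s * m))
                           + Hcoef N eta l ((s - 1) * m) (s * m))"
proof (intro allI impI)
  fix n l assume H: "k * m \<le> n \<and> n < (k + 1) * m \<and> l \<in> {1..d}"
  interpret cbo N \<gamma> \<omega> B eta x l
  proof
    show "N \<ge> 1" using assms(1) by simp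
    show "0 < \<gamma>" "\<gamma> < 1" by fact+
    show "\<And>S j X. S \<noteq> {} \<Longrightarrow> S \<subseteq> {1..N} \<Longrightarrow> \<omega> S j X \<ge> 0" by (rule \<omega>_nonneg)
    show "\<And>S X. S \<noteq> {} \<Longrightarrow> S \<subseteq> {1..N} \<Longrightarrow> (\<Sum>j\<in>S. \<omega> S j X) = 1" by (rule \<omega>_sum)
    show "\<And>S j X. S \<noteq> {} \<Longrightarrow> S \<subseteq> {1..N} \<Longrightarrow> j \<notin> S \<Longrightarrow> \<omega> S j X = 0" by (rule \<omega>_out)
    show "\<And>r i. i \<in> {1..N} \<Longrightarrow> batch_of (B r) i \<noteq> {} \<and> batch_of (B r) i \<subseteq> {1..N}"
      using batch_of_sub[OF batches] by blast
    show "\<And>n i. i \<in> {1..N} \<Longrightarrow>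
       x (Suc n) i l = x n i l
         - \<gamma> * (x n i l - (\<Sum>j\<in>{1..N}. \<omega> (batch_of (B n) i) j (x n) * x n j l))
         - (x n i l - (\<Sum>j\<in>{1..N}. \<omega> (batch_of (B n) i) j (x n) * x n j l)) * eta n i l"
      using dyn H by blast
  qed
  show "diam N (\<lambda>i. x n i l)
       \<le> diam N (\<lambda>i. x 0 i l) * (1 + Hcoef N eta l (k * m) n)
         * (\<Prod>s\<in>{1..k}. 1 - \<gamma> * (1 - \<gamma>) ^ (m - 1) * real (Gcount N B ((s - 1) * m) (s * m))
                           + Hcoef N eta l ((s - 1) * m) (s * m))"
    using final[OF \<open>m \<ge> 1\<close>] H by blast
qed

end
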